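(* Let $[S,T]$ be a Tamari interval of binary trees with $n$ nodes, and define $u_i$ as the number of nodes in the right subtree of node $i$ in $S$ ($i\in[n]$) and $v_j$ as the number of nodes in the left subtree of node $j$ in $T$ ($j\in[n]$). Then the following are equivalent: (a) for every $i\in[n-1]$, $u_i\neq 0$ or $v_{i+1}\neq 0$; (b) $S$ and $T$ have the same canopy.
   Context: Nodes of a binary tree with $n$ nodes are labeled $1,\dots,n$ in in-order. A right rotation replaces a subtree $((A,x,B),y,C)$ by $(A,x,(B,y,C))$; $S\leq_{\mathrm t}T$ (Tamari order) iff $T$ is obtained from $S$ by a sequence of right rotations, and a Tamari interval is a pair $[S,T]$ with $S\leq_{\mathrm t}T$. For each $i\in[n-1]$, exactly one of the following holds in a binary tree: node $i$ has empty right subtree, or node $i+1$ has empty left subtree; the canopy of the tree is the word $w\in\{R,L\}^{n-1}$ with $w_i=R$ in the first case and $w_i=L$ in the second. The pair $(u,v)$ in the claim is exactly the Tamari interval diagram associated with $[S,T]$ (via the Châtel–Pons interval-poset bijection), and condition (a) is the definition of a synchronized Tamari interval diagram; $[S,T]$ is called synchronized when (b) holds. *)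

theory Defs
  imports Main
begin

text \<open>Unlabelled binary trees; nodes are labelled 1..n implicitly in in-order.\<close>
datatype btree = Leaf | Node btree btree

fun nnodes :: "btree \<Rightarrow> nat" where
  "nnodes Leaf = 0"
| "nnodes (Node l r) = nnodes l + 1 + nnodes r"

inductive right_rot :: "btree \<Rightarrow> btree \<Rightarrow> bool" where
  root: "right_rot (Node (Node A B) C) (Node A (Node B C))"
| left: "right_rot l l' \<Longrightarrow> right_rot (Node l r) (Node l' r)"
| right: "right_rot r r' \<Longrightarrow> right_rot (Node l r) (Node l r')"

definition tamari_le :: "btree \<Rightarrow> btree \<Rightarrow> bool" where
  "tamari_le S T \<longleftrightarrow> right_rot\<^sup>*\<^sup>* S T"

fun right_sizes :: "btree \<Rightarrow> nat list" where
  "right_sizes Leaf = []"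
| "right_sizes (Node l r) = right_sizes l @ [nnodes r] @ right_sizes r"

fun left_sizes :: "btree \<Rightarrow> nat list" where
  "left_sizes Leaf = []"
| "left_sizes (Node l r) = left_sizes l @ [nnodes l] @ left_sizes r"

definition rsub :: "btree \<Rightarrow> nat \<Rightarrow> nat" where
  "rsub t i = right_sizes t ! (i - 1)"

definition lsub :: "btree \<Rightarrow> nat \<Rightarrow> nat" where
  "lsub t i = left_sizes t ! (i - 1)"

datatype canopy_letter = R | L

text \<open>Canopy: w_i = R iff node i has empty right subtree, else (node i+1 has
  empty left subtree) w_i = L, for i = 1..n-1.\<close>
definition canopy :: "btree \<Rightarrow> canopy_letter list" where
  "canopy t = map (\<lambda>i. if rsub t i = 0 then R else L) [1..<nnodes t]"

end

theory Submission
  imports Defs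
begin

lemma len_rs: "length (right_sizes t) = nnodes t"
  by (induction t) auto

lemma len_ls: "length (left_sizes t) = nnodes t"
  by (induction t) auto

lemma AB: "map (\<lambda>x. x \<noteq> 0) (left_sizes t) @ [True] =
   (if t = Leaf then [True] else False # map (\<lambda>x. x = 0) (right_sizes t))"
proof (induction t)
  case Leaf
  then show ?case by simp
next
  case (Node l r)
  have r: "map (\<lambda>x. x \<noteq> 0) (left_sizes r) @ [True] = (nnodes r = 0) # map (\<lambda>x. x = 0) (right_sizes r)"
    using Node.IH(2) by (cases r) auto
  have l: "map (\<lambda>x. x \<noteq> 0) (left_sizes l) @ [nnodes l \<noteq> 0] = False # map (\<lambda>x. x = 0) (right_sizes l)"
    using Node.IH(1) by (cases l) auto
  have "map (\<lambda>x. x \<noteq> 0) (left_sizes (Node l r)) @ [True]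
     = (map (\<lambda>x. x \<noteq> 0) (left_sizes l) @ [nnodes l \<noteq> 0]) @ (map (\<lambda>x. x \<noteq> 0) (left_sizes r) @ [True])"
    by simp
  also have "\<dots> = False # map (\<lambda>x. x = 0) (right_sizes (Node l r))"
    using l r by simp
  finally show ?case by simp
qed

lemma excl:
  assumes "i + 1 < nnodes t"
  shows "left_sizes t ! (i+1) \<noteq> 0 \<longleftrightarrow> right_sizes t ! i = 0"
proof -
  have ne: "t \<noteq> Leaf" using assms by auto
  have "(map (\<lambda>x. x \<noteq> 0) (left_sizes t) @ [True]) ! (i+1) = (False # map (\<lambda>x. x = 0) (right_sizes t)) ! (i+1)"
    using AB[of t] ne by simp
  then show ?thesis using assms len_ls[of t] len_rs[of t] by (simp add: nth_append)
qed

definition Mz :: "nat \<Rightarrow> nat \<Rightarrow> bool" where "Mz a b \<longleftrightarrow> (b = 0 \<longrightarrow> a = 0)"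

lemma Mz_refl: "list_all2 Mz xs xs"
  by (rule list_all2_refl) (simp add: Mz_def)

lemma Mz_self: "Mz a a" by (simp add: Mz_def)

lemma rot_mono: "right_rot S T \<Longrightarrow> nnodes S = nnodes T \<and> list_all2 Mz (right_sizes S) (right_sizes T)"
proof (induction rule: right_rot.induct)
  case (root A B C)
  have "Mz (nnodes B) (nnodes B + 1 + nnodes C)" by (simp add: Mz_def)
  then show ?case by (simp add: list_all2_appendI Mz_refl Mz_self)
next
  case (left l l' r)
  then show ?case by (simp add: list_all2_appendI Mz_refl Mz_self)
next
  case (right r r' l)
  then show ?case by (simp add: list_all2_appendI Mz_refl Mz_self)
qed

lemma tam_mono: "right_rot\<^sup>*\<^sup>* S T \<Longrightarrow> list_all2 Mz (right_sizes S) (right_sizes T)"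
proof (induction rule: rtranclp_induct)
  case base
  then show ?case by (rule Mz_refl)
next
  case (step y z)
  have yz: "list_all2 Mz (right_sizes y) (right_sizes z)" using rot_mono[OF step(2)] by simp
  have tr: "\<And>a b c. Mz a b \<Longrightarrow> Mz b c \<Longrightarrow> Mz a c" by (simp add: Mz_def)
  show ?case by (rule list_all2_trans[OF tr step(3) yz])
qed

theorem proposition2p5:
  fixes S T :: btree and n :: nat
  assumes "nnodes S = n" and "nnodes T = n"
    and "tamari_le S T"
  shows "(\<forall>i\<in>{1..<n}. rsub S i \<noteq> 0 \<or> lsub T (i + 1) \<noteq> 0)
         \<longleftrightarrow> canopy S = canopy T"
proof -
  have m: "list_all2 Mz (right_sizes S) (right_sizes T)"
    using tam_mono assms(3) unfolding tamari_le_def by blast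
  have mono: "right_sizes T ! (i-1) = 0 \<Longrightarrow> right_sizes S ! (i-1) = 0" if "i \<in> {1..<n}" for i
    using m that assms(1) len_rs[of S] by (auto simp: list_all2_conv_all_nth Mz_def)
  have ex: "lsub T (i+1) \<noteq> 0 \<longleftrightarrow> right_sizes T ! (i-1) = 0" if "i \<in> {1..<n}" for i
    using excl[of "i-1" T] that assms(2) by (auto simp: lsub_def)
  have c: "canopy S = canopy T \<longleftrightarrow> (\<forall>i\<in>{1..<n}. right_sizes S ! (i-1) = 0 \<longleftrightarrow> right_sizes T ! (i-1) = 0)"
    unfolding canopy_def rsub_def using assms(1,2)
    by (auto simp: map_eq_conv split: if_splits)
  show ?thesis unfolding c using mono ex by (auto simp: rsub_def)
qed

end
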